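(* (1) $\to_{wv}$ is quasi-strongly confluent: ${}_{wv}\!\!\leftarrow\cdot\to_{wv}\ \subseteq\ (\to_{wv}\cdot\,{}_{wv}\!\!\leftarrow)\,\cup=$. (2) $\to_{wd}$ and $\to_d$ are each quasi-strongly confluent: ${}_{wd}\!\!\leftarrow\cdot\to_{wd}\subseteq(\to_{wd}\cdot\,{}_{wd}\!\!\leftarrow)\cup=$ and ${}_{d}\!\leftarrow\cdot\to_{d}\subseteq(\to_{d}\cdot\,{}_{d}\!\leftarrow)\cup=$. (3) ${}_{wd}\!\!\leftarrow\cdot\to_{wv}\ \subseteq\ \to_{wv}\cdot\,{}_{wd}\!\!\leftarrow$; moreover ${}_{d}\!\leftarrow\cdot\to_{v}\ \subseteq\ \to_{v}\cdot\,{}^*_{d}\!\leftarrow$; and ${}^*_{d}\!\leftarrow\cdot\to_v^*\ \subseteq\ \to_v^*\cdot\,{}^*_{d}\!\leftarrow$. (4) $\to_v$ is confluent: ${}^*_{v}\!\leftarrow\cdot\to_v^*\ \subseteq\ \to_v^*\cdot\,{}^*_{v}\!\leftarrow$.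
   Context: Bang calculus. Fix a countably infinite set of variables. The set $!\Lambda$ of terms is $T,S,R ::= x \mid \lambda x.T \mid T\,S \mid \mathrm{der}\,T \mid\ !T$; $\lambda$ is the only binder, terms are taken up to $\alpha$-conversion, $T\{S/x\}$ is capture-avoiding substitution. Contexts: $C ::= [\cdot] \mid \lambda x.C \mid C\,T \mid T\,C \mid \mathrm{der}\,C \mid\ !C$; ground contexts: $W ::= [\cdot] \mid \lambda x.W \mid W\,T \mid T\,W \mid \mathrm{der}\,W$. Root steps: $(\lambda x.T)(!S)\mapsto_v T\{S/x\}$, $\mathrm{der}(!T)\mapsto_d T$. For $r\in\{v,d\}$, $T\to_r S$ iff $T=C[T']$, $S=C[S']$ for some context $C$ with $T'\mapsto_r S'$; $\to_{wr}$ is the same with ground contexts only. Notation: $\cdot$ is relational composition (first the left relation, then the right), ${}_r\!\leftarrow$ is the converse of $\to_r$, ${}^*$ denotes reflexive-transitive closure, and $=$ is the identity relation. *)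

theory Defs
  imports Main
begin

(* Terms of the bang calculus, modulo alpha-conversion, represented with
   de Bruijn indices (Var i refers to the i-th enclosing lambda, or to a
   free variable if i exceeds the binder depth). *)
datatype trm = Var nat | Lam trm | App trm trm | Der trm | Bang trm

fun lift :: "nat \<Rightarrow> trm \<Rightarrow> trm" where
  "lift k (Var i) = (if i < k then Var i else Var (Suc i))"
| "lift k (Lam t) = Lam (lift (Suc k) t)"
| "lift k (App t u) = App (lift k t) (lift k u)"
| "lift k (Der t) = Der (lift k t)"
| "lift k (Bang t) = Bang (lift k t)"

fun subst :: "trm \<Rightarrow> nat \<Rightarrow> trm \<Rightarrow> trm" where
  "subst (Var i) k s = (if k < i then Var (i - 1) else if i = k then s else Var i)"
| "subst (Lam t) k s = Lam (subst t (Suc k) (lift 0 s))"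
| "subst (App t u) k s = App (subst t k s) (subst u k s)"
| "subst (Der t) k s = Der (subst t k s)"
| "subst (Bang t) k s = Bang (subst t k s)"

definition root_v :: "(trm \<times> trm) set" where
  "root_v = {(App (Lam t) (Bang s), subst t 0 s) | t s. True}"

definition root_d :: "(trm \<times> trm) set" where
  "root_d = {(Der (Bang t), t) | t. True}"

datatype ctxt = Hole | CLam ctxt | CAppL ctxt trm | CAppR trm ctxt
  | CDer ctxt | CBang ctxt

fun plug :: "ctxt \<Rightarrow> trm \<Rightarrow> trm" where
  "plug Hole t = t"
| "plug (CLam C) t = Lam (plug C t)"
| "plug (CAppL C u) t = App (plug C t) u"
| "plug (CAppR u C) t = App u (plug C t)"
| "plug (CDer C) t = Der (plug C t)"
| "plug (CBang C) t = Bang (plug C t)"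

fun ground :: "ctxt \<Rightarrow> bool" where
  "ground Hole = True"
| "ground (CLam C) = ground C"
| "ground (CAppL C u) = ground C"
| "ground (CAppR u C) = ground C"
| "ground (CDer C) = ground C"
| "ground (CBang C) = False"

definition ctx_closure :: "(trm \<times> trm) set \<Rightarrow> (trm \<times> trm) set" where
  "ctx_closure r = {(plug C t, plug C s) | C t s. (t, s) \<in> r}"

definition wctx_closure :: "(trm \<times> trm) set \<Rightarrow> (trm \<times> trm) set" where
  "wctx_closure r = {(plug C t, plug C s) | C t s. ground C \<and> (t, s) \<in> r}"

definition step_v :: "(trm \<times> trm) set" where "step_v = ctx_closure root_v"
definition step_d :: "(trm \<times> trm) set" where "step_d = ctx_closure root_d"
definition step_wv :: "(trm \<times> trm) set" where "step_wv = wctx_closure root_v"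
definition step_wd :: "(trm \<times> trm) set" where "step_wd = wctx_closure root_d"

end

theory Submission imports Defs begin

lemma lift_lift:
  "i \<le> k \<Longrightarrow> lift (Suc k) (lift i t) = lift i (lift k t)"
  by (induct t arbitrary: i k) auto

lemma lift_subst [simp]:
  "j \<le> i \<Longrightarrow> lift i (subst t j s) = subst (lift (Suc i) t) j (lift i s)"
  by (induct t arbitrary: i j s) (auto simp: lift_lift)

lemma lift_subst_lt:
  "i \<le> j \<Longrightarrow> lift i (subst t j s) = subst (lift i t) (Suc j) (lift i s)"
  by (induct t arbitrary: i j s) (auto simp: lift_lift)

lemma subst_lift [simp]: "subst (lift k t) k s = t"
  by (induct t arbitrary: k s) auto

lemma subst_subst:
  "i \<le> j \<Longrightarrow> subst (subst t (Suc j) (lift i v)) i (subst u j v) = subst (subst t i u) j v"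
  by (induct t arbitrary: i j u v)
    (auto simp: lift_lift [symmetric] lift_subst_lt)


inductive_set cc :: "(trm \<times> trm) set \<Rightarrow> (trm \<times> trm) set" for r where
  root: "(a,b) \<in> r \<Longrightarrow> (a,b) \<in> cc r"
| lam: "(a,b) \<in> cc r \<Longrightarrow> (Lam a, Lam b) \<in> cc r"
| appL: "(a,b) \<in> cc r \<Longrightarrow> (App a u, App b u) \<in> cc r"
| appR: "(a,b) \<in> cc r \<Longrightarrow> (App u a, App u b) \<in> cc r"
| der: "(a,b) \<in> cc r \<Longrightarrow> (Der a, Der b) \<in> cc r"
| bang: "(a,b) \<in> cc r \<Longrightarrow> (Bang a, Bang b) \<in> cc r"

inductive_set wc :: "(trm \<times> trm) set \<Rightarrow> (trm \<times> trm) set" for r where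
  root: "(a,b) \<in> r \<Longrightarrow> (a,b) \<in> wc r"
| lam: "(a,b) \<in> wc r \<Longrightarrow> (Lam a, Lam b) \<in> wc r"
| appL: "(a,b) \<in> wc r \<Longrightarrow> (App a u, App b u) \<in> wc r"
| appR: "(a,b) \<in> wc r \<Longrightarrow> (App u a, App u b) \<in> wc r"
| der: "(a,b) \<in> wc r \<Longrightarrow> (Der a, Der b) \<in> wc r"

lemma ctx_closure_cc: "ctx_closure r = cc r"
proof
  show "ctx_closure r \<subseteq> cc r"
  proof
    fix p assume "p \<in> ctx_closure r"
    then obtain C t s where p: "p = (plug C t, plug C s)" and ts: "(t,s) \<in> r"
      unfolding ctx_closure_def by blast
    have "(plug C t, plug C s) \<in> cc r"
      by (induct C) (auto intro: cc.intros ts)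
    thus "p \<in> cc r" using p by simp
  qed
next
  show "cc r \<subseteq> ctx_closure r"
  proof
    fix p assume "p \<in> cc r"
    then obtain a b where ab: "p = (a,b)" "(a,b) \<in> cc r" by (cases p) auto
    from ab(2) have "\<exists>C t s. a = plug C t \<and> b = plug C s \<and> (t,s) \<in> r"
    proof induct
      case (root a b) thus ?case by (metis plug.simps(1))
    next
      case (lam a b) thus ?case by (metis plug.simps(2))
    next
      case (appL a b u) thus ?case by (metis plug.simps(3))
    next
      case (appR a b u) thus ?case by (metis plug.simps(4))
    next
      case (der a b) thus ?case by (metis plug.simps(5))
    next
      case (bang a b) thus ?case by (metis plug.simps(6))
    qed
    thus "p \<in> ctx_closure r" using ab unfolding ctx_closure_def by blast
  qed
qed

lemma wctx_closure_wc: "wctx_closure r = wc r"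
proof
  show "wctx_closure r \<subseteq> wc r"
  proof
    fix p assume "p \<in> wctx_closure r"
    then obtain C t s where p: "p = (plug C t, plug C s)" and ts: "(t,s) \<in> r" and g: "ground C"
      unfolding wctx_closure_def by blast
    from g have "(plug C t, plug C s) \<in> wc r"
      by (induct C) (auto intro: wc.intros ts)
    thus "p \<in> wc r" using p by simp
  qed
next
  show "wc r \<subseteq> wctx_closure r"
  proof
    fix p assume "p \<in> wc r"
    then obtain a b where ab: "p = (a,b)" "(a,b) \<in> wc r" by (cases p) auto
    from ab(2) have "\<exists>C t s. a = plug C t \<and> b = plug C s \<and> ground C \<and> (t,s) \<in> r"
    proof induct
      case (root a b) thus ?case by (metis plug.simps(1) ground.simps(1))
    next
      case (lam a b) thus ?case by (metis plug.simps(2) ground.simps(2))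
    next
      case (appL a b u) thus ?case by (metis plug.simps(3) ground.simps(3))
    next
      case (appR a b u) thus ?case by (metis plug.simps(4) ground.simps(4))
    next
      case (der a b) thus ?case by (metis plug.simps(5) ground.simps(5))
    qed
    thus "p \<in> wctx_closure r" using ab unfolding wctx_closure_def by blast
  qed
qed

definition closed :: "(trm \<times> trm) set \<Rightarrow> bool" where
  "closed r \<longleftrightarrow> (\<forall>a b. (a,b) \<in> r \<longrightarrow> (\<forall>k. (lift k a, lift k b) \<in> r) \<and> (\<forall>k s. (subst a k s, subst b k s) \<in> r))"

lemma closed_v: "closed root_v"
  unfolding closed_def root_v_def
  by (auto simp: subst_subst[of 0, simplified, symmetric])

lemma closed_d: "closed root_d"
  unfolding closed_def root_d_def by auto

lemma cc_lift: "(a,b) \<in> cc r \<Longrightarrow> closed r \<Longrightarrow> (lift k a, lift k b) \<in> cc r"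
  by (induct arbitrary: k rule: cc.induct) (auto intro: cc.intros simp: closed_def)

lemma cc_subst: "(a,b) \<in> cc r \<Longrightarrow> closed r \<Longrightarrow> (subst a k s, subst b k s) \<in> cc r"
  by (induct arbitrary: k s rule: cc.induct) (auto intro: cc.intros simp: closed_def)

lemma wc_lift: "(a,b) \<in> wc r \<Longrightarrow> closed r \<Longrightarrow> (lift k a, lift k b) \<in> wc r"
  by (induct arbitrary: k rule: wc.induct) (auto intro: wc.intros simp: closed_def)

lemma wc_subst: "(a,b) \<in> wc r \<Longrightarrow> closed r \<Longrightarrow> (subst a k s, subst b k s) \<in> wc r"
  by (induct arbitrary: k s rule: wc.induct) (auto intro: wc.intros simp: closed_def)

lemma cc_rtr_lam: "(a,b) \<in> (cc r)\<^sup>* \<Longrightarrow> (Lam a, Lam b) \<in> (cc r)\<^sup>*"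
  by (induct rule: rtrancl_induct) (auto intro: rtrancl_into_rtrancl cc.intros)
lemma cc_rtr_appL: "(a,b) \<in> (cc r)\<^sup>* \<Longrightarrow> (App a u, App b u) \<in> (cc r)\<^sup>*"
  by (induct rule: rtrancl_induct) (auto intro: rtrancl_into_rtrancl cc.intros)
lemma cc_rtr_appR: "(a,b) \<in> (cc r)\<^sup>* \<Longrightarrow> (App u a, App u b) \<in> (cc r)\<^sup>*"
  by (induct rule: rtrancl_induct) (auto intro: rtrancl_into_rtrancl cc.intros)
lemma cc_rtr_der: "(a,b) \<in> (cc r)\<^sup>* \<Longrightarrow> (Der a, Der b) \<in> (cc r)\<^sup>*"
  by (induct rule: rtrancl_induct) (auto intro: rtrancl_into_rtrancl cc.intros)
lemma cc_rtr_bang: "(a,b) \<in> (cc r)\<^sup>* \<Longrightarrow> (Bang a, Bang b) \<in> (cc r)\<^sup>*"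
  by (induct rule: rtrancl_induct) (auto intro: rtrancl_into_rtrancl cc.intros)
lemma cc_rtr_app: "(a,b) \<in> (cc r)\<^sup>* \<Longrightarrow> (c,d) \<in> (cc r)\<^sup>* \<Longrightarrow> (App a c, App b d) \<in> (cc r)\<^sup>*"
  by (meson cc_rtr_appL cc_rtr_appR rtrancl_trans)

lemma cc_subst_arg:
  "(s,s') \<in> cc r \<Longrightarrow> closed r \<Longrightarrow> (subst t k s, subst t k s') \<in> (cc r)\<^sup>*"
proof (induct t arbitrary: k s s')
  case (Lam t) thus ?case by (metis cc_rtr_lam cc_lift subst.simps(2))
qed (auto intro: cc_rtr_app cc_rtr_der cc_rtr_bang)


lemma root_v_iff: "(a,b) \<in> root_v \<longleftrightarrow> (\<exists>t s. a = App (Lam t) (Bang s) \<and> b = subst t 0 s)"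
  unfolding root_v_def by auto
lemma root_d_iff: "(a,b) \<in> root_d \<longleftrightarrow> a = Der (Bang b)"
  unfolding root_d_def by auto

inductive_cases ccE: "(Var i, b) \<in> cc r" "(Lam a, b) \<in> cc r" "(App a c, b) \<in> cc r"
  "(Der a, b) \<in> cc r" "(Bang a, b) \<in> cc r"
inductive_cases wcE: "(Var i, b) \<in> wc r" "(Lam a, b) \<in> wc r" "(App a c, b) \<in> wc r"
  "(Der a, b) \<in> wc r" "(Bang a, b) \<in> wc r"

lemma wc_bang_v: "(Bang a, b) \<notin> wc root_v"
  by (auto elim: wcE simp: root_v_iff)
lemma wc_bang_d: "(Bang a, b) \<notin> wc root_d"
  by (auto elim: wcE simp: root_d_iff)

lemma wc_App_inv: "(App a c, z) \<in> wc r \<Longrightarrow> (App a c, z) \<in> r \<or> (\<exists>a'. z = App a' c \<and> (a,a') \<in> wc r) \<or> (\<exists>c'. z = App a c' \<and> (c,c') \<in> wc r)"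
  by (erule wcE(3)) auto
lemma cc_App_inv: "(App a c, z) \<in> cc r \<Longrightarrow> (App a c, z) \<in> r \<or> (\<exists>a'. z = App a' c \<and> (a,a') \<in> cc r) \<or> (\<exists>c'. z = App a c' \<and> (c,c') \<in> cc r)"
  by (erule ccE(3)) auto

lemma peak_wv:
  "(y,x) \<in> wc root_v \<Longrightarrow> (y,z) \<in> wc root_v \<Longrightarrow> x = z \<or> (\<exists>w. (x,w) \<in> wc root_v \<and> (z,w) \<in> wc root_v)"
proof (induct arbitrary: z rule: wc.induct)
  case (root a b)
  then obtain t s where ab: "a = App (Lam t) (Bang s)" "b = subst t 0 s" by (auto simp: root_v_iff)
  from wc_App_inv[OF root(2)[unfolded ab]] show ?case
  proof (elim disjE exE conjE)
    assume "(App (Lam t) (Bang s), z) \<in> root_v" thus ?thesis using ab by (auto simp: root_v_iff)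
  next
    fix b' assume 2: "z = App b' (Bang s)" "(Lam t, b') \<in> wc root_v"
    then obtain t' where "b' = Lam t'" "(t,t') \<in> wc root_v" by (auto elim!: wcE simp: root_v_iff)
    thus ?thesis using 2 ab
      by (metis closed_v root_v_iff wc.root wc_subst)
  next
    fix c' assume "(Bang s, c') \<in> wc root_v" thus ?thesis by (simp add: wc_bang_v)
  qed
next
  case (lam a b)
  then show ?case by (auto elim!: wcE simp: root_v_iff intro: wc.intros)
next
  case (appL a b u)
  from wc_App_inv[OF appL(3)] show ?case
  proof (elim disjE exE conjE)
    assume "(App a u, z) \<in> root_v"
    then obtain t s where ab: "App a u = App (Lam t) (Bang s)" "z = subst t 0 s" by (auto simp: root_v_iff)
    then obtain t' where "b = Lam t'" "(t,t') \<in> wc root_v" using appL(1) by (auto elim!: wcE simp: root_v_iff)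
    thus ?thesis using ab
      by (metis closed_v root_v_iff wc.root wc_subst trm.inject(3))
  qed (use appL in \<open>auto intro: wc.intros\<close>)
next
  case (appR a b u)
  from wc_App_inv[OF appR(3)] show ?case
    by (elim disjE exE conjE) (use appR in \<open>auto intro: wc.intros simp: root_v_iff wc_bang_v\<close>)
next
  case (der a b)
  then show ?case by (auto elim!: wcE simp: root_v_iff intro: wc.intros)
qed


lemma peak_wd:
  "(y,x) \<in> wc root_d \<Longrightarrow> (y,z) \<in> wc root_d \<Longrightarrow> x = z \<or> (\<exists>w. (x,w) \<in> wc root_d \<and> (z,w) \<in> wc root_d)"
proof (induct arbitrary: z rule: wc.induct)
  case (root a b)
  then show ?case by (auto elim!: wcE simp: root_d_iff wc_bang_d)
next
  case (lam a b)
  then show ?case by (auto elim!: wcE simp: root_d_iff intro: wc.intros)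
next
  case (appL a b u)
  from wc_App_inv[OF appL(3)] show ?case
    by (elim disjE exE conjE) (use appL in \<open>auto intro: wc.intros simp: root_d_iff\<close>)
next
  case (appR a b u)
  from wc_App_inv[OF appR(3)] show ?case
    by (elim disjE exE conjE) (use appR in \<open>auto intro: wc.intros simp: root_d_iff\<close>)
next
  case (der a b)
  then show ?case by (auto elim!: wcE simp: root_d_iff wc_bang_d intro: wc.intros)
qed

lemma cc_bang_inv_d: "(Bang a, b) \<in> cc root_d \<Longrightarrow> \<exists>a'. b = Bang a' \<and> (a,a') \<in> cc root_d"
  by (erule ccE(5)) (auto simp: root_d_iff)
lemma cc_bang_inv_v: "(Bang a, b) \<in> cc root_v \<Longrightarrow> \<exists>a'. b = Bang a' \<and> (a,a') \<in> cc root_v"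
  by (erule ccE(5)) (auto simp: root_v_iff)

lemma cc_Der_inv: "(Der a, z) \<in> cc r \<Longrightarrow> (Der a, z) \<in> r \<or> (\<exists>a'. z = Der a' \<and> (a,a') \<in> cc r)"
  by (erule ccE(4)) auto

lemma peak_d:
  "(y,x) \<in> cc root_d \<Longrightarrow> (y,z) \<in> cc root_d \<Longrightarrow> x = z \<or> (\<exists>w. (x,w) \<in> cc root_d \<and> (z,w) \<in> cc root_d)"
proof (induct arbitrary: z rule: cc.induct)
  case (root a b)
  then have a: "a = Der (Bang b)" by (simp add: root_d_iff)
  from cc_Der_inv[OF root(2)[unfolded a]] show ?case
  proof (elim disjE exE conjE)
    assume "(Der (Bang b), z) \<in> root_d" thus ?thesis by (simp add: root_d_iff)
  next
    fix b' assume 2: "z = Der b'" "(Bang b, b') \<in> cc root_d"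
    then obtain c where "b' = Bang c" "(b,c) \<in> cc root_d" using cc_bang_inv_d by blast
    moreover have "(Der (Bang c), c) \<in> cc root_d" by (simp add: cc.root root_d_iff)
    ultimately show ?thesis using 2 by blast
  qed
next
  case (lam a b)
  then show ?case by (auto elim!: ccE simp: root_d_iff intro: cc.intros)
next
  case (appL a b u)
  from cc_App_inv[OF appL(3)] show ?case
    by (elim disjE exE conjE) (use appL in \<open>auto intro: cc.intros simp: root_d_iff\<close>)
next
  case (appR a b u)
  from cc_App_inv[OF appR(3)] show ?case
    by (elim disjE exE conjE) (use appR in \<open>auto intro: cc.intros simp: root_d_iff\<close>)
next
  case (der a b)
  from cc_Der_inv[OF der(3)] show ?case
  proof (elim disjE exE conjE)
    assume 1: "(Der a, z) \<in> root_d"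
    then obtain c where "a = Bang c" by (auto simp: root_d_iff)
    then obtain c' where "b = Bang c'" "(c,c') \<in> cc root_d" using der(1) cc_bang_inv_d by blast
    moreover have "(Der (Bang c'), c') \<in> cc root_d" by (simp add: cc.root root_d_iff)
    ultimately show ?thesis using 1 \<open>a = Bang c\<close> by (auto simp: root_d_iff)
  next
    fix b' assume "z = Der b'" "(a, b') \<in> cc root_d" thus ?thesis using der by (auto intro: cc.intros)
  qed
next
  case (bang a b)
  then show ?case by (auto elim!: ccE simp: root_d_iff intro: cc.intros)
qed


lemma cc_Lam_inv: "(Lam a, z) \<in> cc r \<Longrightarrow> (Lam a, z) \<in> r \<or> (\<exists>a'. z = Lam a' \<and> (a,a') \<in> cc r)"
  by (erule ccE(2)) auto
lemma cc_Bang_inv: "(Bang a, z) \<in> cc r \<Longrightarrow> (Bang a, z) \<in> r \<or> (\<exists>a'. z = Bang a' \<and> (a,a') \<in> cc r)"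
  by (erule ccE(5)) auto
lemma wc_Lam_inv: "(Lam a, z) \<in> wc r \<Longrightarrow> (Lam a, z) \<in> r \<or> (\<exists>a'. z = Lam a' \<and> (a,a') \<in> wc r)"
  by (erule wcE(2)) auto
lemma wc_Der_inv: "(Der a, z) \<in> wc r \<Longrightarrow> (Der a, z) \<in> r \<or> (\<exists>a'. z = Der a' \<and> (a,a') \<in> wc r)"
  by (erule wcE(4)) auto

lemma peak_wd_wv:
  "(y,x) \<in> wc root_d \<Longrightarrow> (y,z) \<in> wc root_v \<Longrightarrow> (\<exists>w. (x,w) \<in> wc root_v \<and> (z,w) \<in> wc root_d)"
proof (induct arbitrary: z rule: wc.induct)
  case (root a b)
  then have a: "a = Der (Bang b)" by (simp add: root_d_iff)
  from wc_Der_inv[OF root(2)[unfolded a]] show ?case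
    by (auto simp: root_v_iff wc_bang_v)
next
  case (lam a b)
  from wc_Lam_inv[OF lam(3)] show ?case
  proof (elim disjE exE conjE)
    fix a' assume "z = Lam a'" "(a, a') \<in> wc root_v"
    then obtain w where "(b,w) \<in> wc root_v" "(a',w) \<in> wc root_d" using lam(2) by blast
    thus ?thesis using \<open>z = Lam a'\<close> by (blast intro: wc.lam)
  qed (auto simp: root_v_iff)
next
  case (appL a b u)
  from wc_App_inv[OF appL(3)] show ?case
  proof (elim disjE exE conjE)
    assume "(App a u, z) \<in> root_v"
    then obtain t s where ab: "a = Lam t" "u = Bang s" "z = subst t 0 s" by (auto simp: root_v_iff)
    from wc_Lam_inv[OF appL(1)[unfolded ab]]
    obtain t' where t': "b = Lam t'" "(t,t') \<in> wc root_d" by (auto simp: root_d_iff)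
    have "(App b u, subst t' 0 s) \<in> wc root_v" using t' ab by (auto simp: root_v_iff intro: wc.root)
    moreover have "(z, subst t' 0 s) \<in> wc root_d" using t' ab closed_d wc_subst by blast
    ultimately show ?thesis by blast
  next
    fix a' assume "z = App a' u" "(a, a') \<in> wc root_v"
    then obtain w where "(b,w) \<in> wc root_v" "(a',w) \<in> wc root_d" using appL(2) by blast
    thus ?thesis using \<open>z = App a' u\<close> by (blast intro: wc.appL)
  next
    fix c' assume "z = App a c'" "(u, c') \<in> wc root_v"
    then show ?thesis using appL(1) by (meson wc.appL wc.appR)
  qed
next
  case (appR a b u)
  from wc_App_inv[OF appR(3)] show ?case
  proof (elim disjE exE conjE)
    fix a' assume "z = App u a'" "(a, a') \<in> wc root_v"
    then obtain w where "(b,w) \<in> wc root_v" "(a',w) \<in> wc root_d" using appR(2) by blast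
    thus ?thesis using \<open>z = App u a'\<close> by (blast intro: wc.appR)
  next
    fix c' assume "z = App c' a" "(u, c') \<in> wc root_v"
    then show ?thesis using appR(1) by (meson wc.appL wc.appR)
  qed (use appR in \<open>auto simp: root_v_iff wc_bang_d\<close>)
next
  case (der a b)
  from wc_Der_inv[OF der(3)] show ?case
  proof (elim disjE exE conjE)
    fix a' assume "z = Der a'" "(a, a') \<in> wc root_v"
    then obtain w where "(b,w) \<in> wc root_v" "(a',w) \<in> wc root_d" using der(2) by blast
    thus ?thesis using \<open>z = Der a'\<close> by (blast intro: wc.der)
  qed (auto simp: root_v_iff)
qed

lemma peak_d_v:
  "(y,x) \<in> cc root_d \<Longrightarrow> (y,z) \<in> cc root_v \<Longrightarrow> (\<exists>w. (x,w) \<in> cc root_v \<and> (z,w) \<in> (cc root_d)\<^sup>*)"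
proof (induct arbitrary: z rule: cc.induct)
  case (root a b)
  then have a: "a = Der (Bang b)" by (simp add: root_d_iff)
  from cc_Der_inv[OF root(2)[unfolded a]] show ?case
  proof (elim disjE exE conjE)
    fix b' assume 2: "z = Der b'" "(Bang b, b') \<in> cc root_v"
    then obtain c where "b' = Bang c" "(b,c) \<in> cc root_v" using cc_bang_inv_v by blast
    moreover have "(Der (Bang c), c) \<in> cc root_d" by (simp add: cc.root root_d_iff)
    ultimately show ?thesis using 2 by blast
  qed (auto simp: root_v_iff)
next
  case (lam a b)
  from cc_Lam_inv[OF lam(3)] show ?case
  proof (elim disjE exE conjE)
    fix a' assume "z = Lam a'" "(a, a') \<in> cc root_v"
    then obtain w where "(b,w) \<in> cc root_v" "(a',w) \<in> (cc root_d)\<^sup>*" using lam(2) by blast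
    thus ?thesis using \<open>z = Lam a'\<close> by (blast intro: cc.lam cc_rtr_lam)
  qed (auto simp: root_v_iff)
next
  case (appL a b u)
  from cc_App_inv[OF appL(3)] show ?case
  proof (elim disjE exE conjE)
    assume "(App a u, z) \<in> root_v"
    then obtain t s where ab: "a = Lam t" "u = Bang s" "z = subst t 0 s" by (auto simp: root_v_iff)
    from cc_Lam_inv[OF appL(1)[unfolded ab]]
    obtain t' where t': "b = Lam t'" "(t,t') \<in> cc root_d" by (auto simp: root_d_iff)
    have "(App b u, subst t' 0 s) \<in> cc root_v" using t' ab by (auto simp: root_v_iff intro: cc.root)
    moreover have "(z, subst t' 0 s) \<in> cc root_d" using t' ab closed_d cc_subst by blast
    ultimately show ?thesis by blast
  next
    fix a' assume "z = App a' u" "(a, a') \<in> cc root_v"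
    then show ?thesis using appL(2) by (meson cc.appL cc_rtr_appL)
  next
    fix c' assume "z = App a c'" "(u, c') \<in> cc root_v"
    then show ?thesis using appL(1) by (meson cc.appL cc.appR r_into_rtrancl)
  qed
next
  case (appR a b u)
  from cc_App_inv[OF appR(3)] show ?case
  proof (elim disjE exE conjE)
    assume "(App u a, z) \<in> root_v"
    then obtain t s where ab: "u = Lam t" "a = Bang s" "z = subst t 0 s" by (auto simp: root_v_iff)
    from cc_Bang_inv[OF appR(1)[unfolded ab]]
    obtain s' where s': "b = Bang s'" "(s,s') \<in> cc root_d" by (auto simp: root_d_iff)
    have "(App u b, subst t 0 s') \<in> cc root_v" using s' ab by (auto simp: root_v_iff intro: cc.root)
    moreover have "(z, subst t 0 s') \<in> (cc root_d)\<^sup>*" using s' ab closed_d cc_subst_arg by blast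
    ultimately show ?thesis by blast
  next
    fix a' assume "z = App u a'" "(a, a') \<in> cc root_v"
    then show ?thesis using appR(2) by (meson cc.appR cc_rtr_appR)
  next
    fix c' assume "z = App c' a" "(u, c') \<in> cc root_v"
    then show ?thesis using appR(1) by (meson cc.appL cc.appR r_into_rtrancl)
  qed
next
  case (der a b)
  from cc_Der_inv[OF der(3)] show ?case
  proof (elim disjE exE conjE)
    fix a' assume "z = Der a'" "(a, a') \<in> cc root_v"
    then obtain w where "(b,w) \<in> cc root_v" "(a',w) \<in> (cc root_d)\<^sup>*" using der(2) by blast
    thus ?thesis using \<open>z = Der a'\<close> by (blast intro: cc.der cc_rtr_der)
  qed (auto simp: root_v_iff)
next
  case (bang a b)
  from cc_Bang_inv[OF bang(3)] show ?case
  proof (elim disjE exE conjE)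
    fix a' assume "z = Bang a'" "(a, a') \<in> cc root_v"
    then obtain w where "(b,w) \<in> cc root_v" "(a',w) \<in> (cc root_d)\<^sup>*" using bang(2) by blast
    thus ?thesis using \<open>z = Bang a'\<close> by (blast intro: cc.bang cc_rtr_bang)
  qed (auto simp: root_v_iff)
qed


inductive_set par :: "(trm \<times> trm) set" where
  pvar: "(Var i, Var i) \<in> par"
| plam: "(a,b) \<in> par \<Longrightarrow> (Lam a, Lam b) \<in> par"
| papp: "(a,b) \<in> par \<Longrightarrow> (c,d) \<in> par \<Longrightarrow> (App a c, App b d) \<in> par"
| pder: "(a,b) \<in> par \<Longrightarrow> (Der a, Der b) \<in> par"
| pbang: "(a,b) \<in> par \<Longrightarrow> (Bang a, Bang b) \<in> par"
| pbeta: "(t,t') \<in> par \<Longrightarrow> (s,s') \<in> par \<Longrightarrow> (App (Lam t) (Bang s), subst t' 0 s') \<in> par"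

lemma par_refl: "(t,t) \<in> par"
  by (induct t) (auto intro: par.intros)

lemma par_lift: "(a,b) \<in> par \<Longrightarrow> (lift k a, lift k b) \<in> par"
  by (induct arbitrary: k rule: par.induct) (auto intro: par.intros)

lemma par_subst: "(a,b) \<in> par \<Longrightarrow> (s,s') \<in> par \<Longrightarrow> (subst a k s, subst b k s') \<in> par"
proof (induct arbitrary: k s s' rule: par.induct)
  case (pvar i) thus ?case by (auto intro: par_refl)
next
  case (plam a b) thus ?case by (simp add: par.plam par_lift)
next
  case (pbeta t t' u u')
  have "(App (Lam (subst t (Suc k) (lift 0 s))) (Bang (subst u k s)),
         subst (subst t' (Suc k) (lift 0 s')) 0 (subst u' k s')) \<in> par"
    using pbeta by (simp add: par.pbeta par_lift)
  thus ?case by (simp add: subst_subst[of 0, simplified])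
qed (auto intro: par.intros)

inductive_cases parE: "(Lam a, b) \<in> par" "(Bang a, b) \<in> par"

lemma par_Lam_inv: "(Lam a, z) \<in> par \<Longrightarrow> \<exists>b. z = Lam b \<and> (a,b) \<in> par"
  by (erule parE(1)) auto
lemma par_Bang_inv: "(Bang a, z) \<in> par \<Longrightarrow> \<exists>b. z = Bang b \<and> (a,b) \<in> par"
  by (erule parE(2)) auto

fun dev :: "trm \<Rightarrow> trm" where
  "dev (Var i) = Var i"
| "dev (Lam t) = Lam (dev t)"
| "dev (App (Lam t) (Bang s)) = subst (dev t) 0 (dev s)"
| "dev (App t u) = App (dev t) (dev u)"
| "dev (Der t) = Der (dev t)"
| "dev (Bang t) = Bang (dev t)"

lemma dev_App_other: "\<not>(\<exists>t s. a = Lam t \<and> c = Bang s) \<Longrightarrow> dev (App a c) = App (dev a) (dev c)"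
  by (cases a; cases c) auto

lemma par_dev: "(a,b) \<in> par \<Longrightarrow> (b, dev a) \<in> par"
proof (induct rule: par.induct)
  case (papp a b c d)
  show ?case
  proof (cases "\<exists>t s. a = Lam t \<and> c = Bang s")
    case True
    then obtain t s where ts: "a = Lam t" "c = Bang s" by blast
    from par_Lam_inv[OF papp(1)[unfolded ts]] obtain t' where t': "b = Lam t'" "(t,t') \<in> par" by blast
    from par_Bang_inv[OF papp(3)[unfolded ts]] obtain s' where s': "d = Bang s'" "(s,s') \<in> par" by blast
    from papp(2) t' have "(t', dev t) \<in> par" using ts by (auto dest: par_Lam_inv)
    moreover from papp(4) s' have "(s', dev s) \<in> par" using ts by (auto dest: par_Bang_inv)
    ultimately show ?thesis using ts t' s' by (auto intro: par.pbeta)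
  next
    case False thus ?thesis using papp by (simp add: dev_App_other par.papp)
  qed
next
  case (pbeta t t' s s')
  thus ?case by (simp add: par_subst)
qed (auto intro: par.intros)

lemma v_par: "(a,b) \<in> cc root_v \<Longrightarrow> (a,b) \<in> par"
  by (induct rule: cc.induct) (auto simp: root_v_iff intro: par.intros par_refl)

lemma par_v: "(a,b) \<in> par \<Longrightarrow> (a,b) \<in> (cc root_v)\<^sup>*"
proof (induct rule: par.induct)
  case (pbeta t t' s s')
  have "(App (Lam t) (Bang s), App (Lam t') (Bang s')) \<in> (cc root_v)\<^sup>*"
    using pbeta by (auto intro: cc_rtr_app cc_rtr_lam cc_rtr_bang)
  moreover have "(App (Lam t') (Bang s'), subst t' 0 s') \<in> cc root_v"
    by (auto intro: cc.root simp: root_v_iff)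
  ultimately show ?case by (rule rtrancl_into_rtrancl)
qed (auto intro: cc_rtr_app cc_rtr_lam cc_rtr_bang cc_rtr_der)

lemma par_rtr_eq: "par\<^sup>* = (cc root_v)\<^sup>*"
proof
  show "par\<^sup>* \<subseteq> (cc root_v)\<^sup>*"
    using par_v by (metis rtrancl_subset_rtrancl subrelI)
  show "(cc root_v)\<^sup>* \<subseteq> par\<^sup>*"
    using v_par by (metis rtrancl_mono subrelI)
qed

lemma par_strip: "(y,x) \<in> par\<^sup>* \<Longrightarrow> (y,z) \<in> par \<Longrightarrow> \<exists>w. (x,w) \<in> par \<and> (z,w) \<in> par\<^sup>*"
proof (induct arbitrary: z rule: rtrancl_induct)
  case base thus ?case using par_refl by blast
next
  case (step x1 x2)
  then obtain w where w: "(x1,w) \<in> par" "(z,w) \<in> par\<^sup>*" by blast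
  have "(x2, dev x1) \<in> par" "(w, dev x1) \<in> par" using step(2) w(1) par_dev by auto
  thus ?case using w(2) by (meson rtrancl.rtrancl_into_rtrancl)
qed

lemma par_confl0: "(y,z) \<in> par\<^sup>* \<Longrightarrow> (y,x) \<in> par\<^sup>* \<Longrightarrow> \<exists>w. (x,w) \<in> par\<^sup>* \<and> (z,w) \<in> par\<^sup>*"
proof (induct arbitrary: x rule: rtrancl_induct)
  case base thus ?case by blast
next
  case (step z1 z2)
  then obtain w where w: "(x,w) \<in> par\<^sup>*" "(z1,w) \<in> par\<^sup>*" by blast
  from par_strip[OF w(2) step(2)] obtain u where "(w,u) \<in> par" "(z2,u) \<in> par\<^sup>*" by blast
  thus ?case using w(1) by (meson rtrancl.rtrancl_into_rtrancl)
qed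

lemma par_confl: "(y,x) \<in> par\<^sup>* \<Longrightarrow> (y,z) \<in> par\<^sup>* \<Longrightarrow> \<exists>w. (x,w) \<in> par\<^sup>* \<and> (z,w) \<in> par\<^sup>*"
  using par_confl0 by blast

lemma dv_strip: "(y,x) \<in> (cc root_d)\<^sup>* \<Longrightarrow> (y,z) \<in> cc root_v \<Longrightarrow> \<exists>w. (x,w) \<in> cc root_v \<and> (z,w) \<in> (cc root_d)\<^sup>*"
proof (induct arbitrary: z rule: rtrancl_induct)
  case base thus ?case by blast
next
  case (step x1 x2)
  then obtain w where w: "(x1,w) \<in> cc root_v" "(z,w) \<in> (cc root_d)\<^sup>*" by blast
  from peak_d_v[OF step(2) w(1)] obtain u where "(x2,u) \<in> cc root_v" "(w,u) \<in> (cc root_d)\<^sup>*" by blast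
  thus ?case using w(2) by (meson rtrancl_trans)
qed

lemma dv_comm: "(y,z) \<in> (cc root_v)\<^sup>* \<Longrightarrow> (y,x) \<in> (cc root_d)\<^sup>* \<Longrightarrow> \<exists>w. (x,w) \<in> (cc root_v)\<^sup>* \<and> (z,w) \<in> (cc root_d)\<^sup>*"
proof (induct arbitrary: x rule: rtrancl_induct)
  case base thus ?case by blast
next
  case (step z1 z2)
  then obtain w where w: "(x,w) \<in> (cc root_v)\<^sup>*" "(z1,w) \<in> (cc root_d)\<^sup>*" by blast
  from dv_strip[OF w(2) step(2)] obtain u where "(w,u) \<in> cc root_v" "(z2,u) \<in> (cc root_d)\<^sup>*" by blast
  thus ?case using w(1) by (meson rtrancl.rtrancl_into_rtrancl)
qed

theorem mainTheorem6:
  shows "(step_wv\<inverse> O step_wv \<subseteq> (step_wv O step_wv\<inverse>) \<union> Id)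
       \<and> (step_wd\<inverse> O step_wd \<subseteq> (step_wd O step_wd\<inverse>) \<union> Id)
       \<and> (step_d\<inverse> O step_d \<subseteq> (step_d O step_d\<inverse>) \<union> Id)
       \<and> (step_wd\<inverse> O step_wv \<subseteq> step_wv O step_wd\<inverse>)
       \<and> (step_d\<inverse> O step_v \<subseteq> step_v O (step_d\<^sup>*)\<inverse>)
       \<and> ((step_d\<^sup>*)\<inverse> O step_v\<^sup>* \<subseteq> step_v\<^sup>* O (step_d\<^sup>*)\<inverse>)
       \<and> ((step_v\<^sup>*)\<inverse> O step_v\<^sup>* \<subseteq> step_v\<^sup>* O (step_v\<^sup>*)\<inverse>)"
  unfolding step_wv_def step_wd_def step_d_def step_v_def ctx_closure_cc wctx_closure_wc
proof (intro conjI subrelI)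
  fix x z assume "(x,z) \<in> (wc root_v)\<inverse> O wc root_v"
  then obtain y where "(y,x) \<in> wc root_v" "(y,z) \<in> wc root_v" by blast
  from peak_wv[OF this] show "(x,z) \<in> (wc root_v O (wc root_v)\<inverse>) \<union> Id" by blast
next
  fix x z assume "(x,z) \<in> (wc root_d)\<inverse> O wc root_d"
  then obtain y where "(y,x) \<in> wc root_d" "(y,z) \<in> wc root_d" by blast
  from peak_wd[OF this] show "(x,z) \<in> (wc root_d O (wc root_d)\<inverse>) \<union> Id" by blast
next
  fix x z assume "(x,z) \<in> (cc root_d)\<inverse> O cc root_d"
  then obtain y where "(y,x) \<in> cc root_d" "(y,z) \<in> cc root_d" by blast
  from peak_d[OF this] show "(x,z) \<in> (cc root_d O (cc root_d)\<inverse>) \<union> Id" by blast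
next
  fix x z assume "(x,z) \<in> (wc root_d)\<inverse> O wc root_v"
  then obtain y where "(y,x) \<in> wc root_d" "(y,z) \<in> wc root_v" by blast
  from peak_wd_wv[OF this] show "(x,z) \<in> wc root_v O (wc root_d)\<inverse>" by blast
next
  fix x z assume "(x,z) \<in> (cc root_d)\<inverse> O cc root_v"
  then obtain y where "(y,x) \<in> cc root_d" "(y,z) \<in> cc root_v" by blast
  from peak_d_v[OF this] show "(x,z) \<in> cc root_v O ((cc root_d)\<^sup>*)\<inverse>" by blast
next
  fix x z assume "(x,z) \<in> ((cc root_d)\<^sup>*)\<inverse> O (cc root_v)\<^sup>*"
  then obtain y where "(y,x) \<in> (cc root_d)\<^sup>*" "(y,z) \<in> (cc root_v)\<^sup>*" by blast
  from dv_comm[OF this(2) this(1)] show "(x,z) \<in> (cc root_v)\<^sup>* O ((cc root_d)\<^sup>*)\<inverse>" by blast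
next
  fix x z assume "(x,z) \<in> ((cc root_v)\<^sup>*)\<inverse> O (cc root_v)\<^sup>*"
  then obtain y where "(y,x) \<in> (cc root_v)\<^sup>*" "(y,z) \<in> (cc root_v)\<^sup>*" by blast
  from par_confl[OF this[folded par_rtr_eq]] show "(x,z) \<in> (cc root_v)\<^sup>* O ((cc root_v)\<^sup>*)\<inverse>"
    unfolding par_rtr_eq by blast
qed

end
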